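(* Let $p$ be a prime, $G$ an abelian $p$-group having a direct summand of the form $X = Y \oplus Z$, and $n$ a positive integer. Suppose either (a) $Y \cong \mathbb{Z}_{p^n}$ and $Z$ is the direct sum of infinitely many copies of $\mathbb{Z}_{p^m}$, where either $n+2 \le m < \omega$ or $m = \infty$; or (b) $Y$ is the direct sum of infinitely many copies of $\mathbb{Z}_{p^n}$ and $Z \cong \mathbb{Z}_{p^\infty}$. Then $G$ is not semi-generalized Bassian.
   Context: All groups are additively written abelian groups; $\mathbb{Z}_{p^k}$ is the cyclic group of order $p^k$ and $\mathbb{Z}_{p^\infty}$ is the quasicyclic (Prüfer) $p$-group. A subgroup $H$ of a group $A$ is essential in $A$ if $H \cap S \neq \{0\}$ for every non-zero subgroup $S$ of $A$. A group $G$ is semi-generalized Bassian if, for every subgroup $H \le G$, the existence of an injective homomorphism $G \to G/H$ implies that $H$ is an essential subgroup of some direct summand of $G$. *)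

theory Defs
  imports "HOL-Algebra.Algebra"
begin

text \<open>Abelian groups are HOL-Algebra commutative groups (written multiplicatively).\<close>

definition p_group :: "nat \<Rightarrow> ('a, 'b) monoid_scheme \<Rightarrow> bool" where
  "p_group p G \<longleftrightarrow> (\<forall>x \<in> carrier G. \<exists>k::nat. x [^]\<^bsub>G\<^esub> (p ^ k) = \<one>\<^bsub>G\<^esub>)"

definition quasicyclic_group :: "nat \<Rightarrow> rat monoid" where
  "quasicyclic_group p =
     \<lparr> carrier = {x. 0 \<le> x \<and> x < 1 \<and> (\<exists>(a::int) (k::nat). x = of_int a / of_nat (p ^ k))},
       monoid.mult = (\<lambda>x y. frac (x + y)),
       one = 0 \<rparr>"

definition internal_direct_sum :: "('a, 'b) monoid_scheme \<Rightarrow> 'a set \<Rightarrow> 'a set \<Rightarrow> 'a set \<Rightarrow> bool" where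
  "internal_direct_sum G A B S \<longleftrightarrow>
     subgroup A G \<and> subgroup B G \<and> A \<inter> B = {\<one>\<^bsub>G\<^esub>} \<and> A <#>\<^bsub>G\<^esub> B = S"

definition direct_summand :: "('a, 'b) monoid_scheme \<Rightarrow> 'a set \<Rightarrow> bool" where
  "direct_summand G A \<longleftrightarrow> (\<exists>B. internal_direct_sum G A B (carrier G))"

definition essential_in :: "('a, 'b) monoid_scheme \<Rightarrow> 'a set \<Rightarrow> 'a set \<Rightarrow> bool" where
  "essential_in G H A \<longleftrightarrow> subgroup H G \<and> subgroup A G \<and> H \<subseteq> A \<and>
     (\<forall>S. subgroup S G \<and> S \<subseteq> A \<and> S \<noteq> {\<one>\<^bsub>G\<^esub>} \<longrightarrow> H \<inter> S \<noteq> {\<one>\<^bsub>G\<^esub>})"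

definition semi_generalized_bassian :: "('a, 'b) monoid_scheme \<Rightarrow> bool" where
  "semi_generalized_bassian G \<longleftrightarrow>
     (\<forall>H. subgroup H G \<longrightarrow>
        (\<exists>f. f \<in> hom G (G Mod H) \<and> inj_on f (carrier G)) \<longrightarrow>
        (\<exists>S. direct_summand G S \<and> essential_in G H S))"

end

theory Submission
  imports Defs "HOL-Computational_Algebra.Primes"
begin


lemma (in group) pow_subgroup:
  assumes "x \<in> carrier G" shows "subgroup {x [^] (k::int) |k. True} G"
  using generate_pow[OF assms] generate_is_subgroup[of "{x}"] assms by auto

context comm_group begin

lemma ids_basic:
  assumes "internal_direct_sum G A B C"
  shows "subgroup A G" "subgroup B G" "A \<inter> B = {\<one>}" "A <#> B = C"
  using assms unfolding internal_direct_sum_def by auto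

lemma ids_decomp:
  assumes "internal_direct_sum G A B C" "x \<in> C"
  obtains a b where "a \<in> A" "b \<in> B" "x = a \<otimes> b"
  using assms unfolding internal_direct_sum_def set_mult_def by auto

lemma ids_mem:
  assumes "internal_direct_sum G A B C" "a \<in> A" "b \<in> B"
  shows "a \<otimes> b \<in> C"
  using assms unfolding internal_direct_sum_def set_mult_def by auto

lemma ids_unique:
  assumes "internal_direct_sum G A B C" "a \<in> A" "a' \<in> A" "b \<in> B" "b' \<in> B"
    and "a \<otimes> b = a' \<otimes> b'"
  shows "a = a' \<and> b = b'"
proof -
  note s = ids_basic[OF assms(1)]
  have c: "a \<in> carrier G" "a' \<in> carrier G" "b \<in> carrier G" "b' \<in> carrier G"
    using s assms subgroup.mem_carrier by metis+
  have e: "a \<otimes> inv a' = b' \<otimes> inv b"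
  proof -
    have "a \<otimes> inv a' = (a \<otimes> b) \<otimes> inv b \<otimes> inv a'" using c by (simp add: m_assoc)
    also have "\<dots> = (a' \<otimes> b') \<otimes> inv b \<otimes> inv a'" using assms(6) by simp
    also have "\<dots> = b' \<otimes> inv b" using c
      by (metis inv_closed m_assoc m_closed m_comm r_inv r_one)
    finally show ?thesis .
  qed
  have "a \<otimes> inv a' \<in> A" using s assms by (meson subgroup.m_inv_closed subgroup.m_closed)
  moreover have "b' \<otimes> inv b \<in> B" using s assms by (meson subgroup.m_inv_closed subgroup.m_closed)
  ultimately have "a \<otimes> inv a' = \<one>" using e s(3) by auto
  then have "a = a'" using c by (metis inv_equality inv_inv inv_closed r_inv m_comm)
  moreover then have "b = b'" using assms(6) c by (metis l_cancel)
  ultimately show ?thesis by simp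
qed

end



context comm_group begin

lemma sg_pow: "subgroup K G \<Longrightarrow> x \<in> K \<Longrightarrow> x [^] (k::int) \<in> K"
  by (rule subgroup_int_pow_closed)

lemma not_ess:
  fixes P :: int
  assumes ids: "internal_direct_sum G Y C (carrier G)"
  and pr: "Factorial_Ring.prime P" and n: "n > 0"
  and y0: "y0 \<in> Y" "y0 [^] (P^(n-1)) \<noteq> \<one>" and yexp: "\<forall>y\<in>Y. y [^] (P^n) = \<one>"
  and z0: "z0 \<in> C" and zord: "\<forall>a::int. z0 [^] (P^2*a) = \<one> \<longrightarrow> P^n dvd a"
  and hdef: "h = y0 \<otimes> z0 [^] P"
  shows "\<not>(\<exists>S. direct_summand G S \<and> essential_in G {h [^] (k::int) |k. True} S)"
proof
  note s = ids_basic[OF ids]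
  have cy: "y0 \<in> carrier G" using s y0 subgroup.mem_carrier by metis
  have cz: "z0 \<in> carrier G" using s z0 subgroup.mem_carrier by metis
  have ch: "h \<in> carrier G" using hdef cy cz by simp
  have Pn: "P^n = P * P^(n-1)" using n by (metis power_eq_if not_gr0)
  define H where "H = {h [^] (k::int) |k. True}"
  have hpow: "h [^] (a::int) = y0 [^] a \<otimes> z0 [^] (P*a)" for a
    using hdef cy cz by (simp add: int_pow_distrib int_pow_pow)
  have F1: "h [^] (P^(n-1)) \<noteq> g [^] (P^n)" if g: "g \<in> carrier G" for g
  proof
    assume eq: "h [^] (P^(n-1)) = g [^] (P^n)"
    obtain a c where ac: "a \<in> Y" "c \<in> C" "g = a \<otimes> c" using ids_decomp[OF ids] g by blast
    have ca: "a \<in> carrier G" and cc: "c \<in> carrier G" using s ac subgroup.mem_carrier by metis+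
    have "g [^] (P^n) = c [^] (P^n)" using ac ca cc yexp by (simp add: int_pow_distrib)
    with eq hpow have "y0 [^] (P^(n-1)) \<otimes> z0 [^] (P^n) = c [^] (P^n)" by (simp add: Pn)
    then have "y0 [^] (P^(n-1)) = c [^] (P^n) \<otimes> inv (z0 [^] (P^n))"
      using cy cz cc by (metis int_pow_closed inv_solve_right)
    moreover have "c [^] (P^n) \<otimes> inv (z0 [^] (P^n)) \<in> C"
      using s ac z0 by (meson sg_pow subgroup.m_closed subgroup.m_inv_closed)
    moreover have "y0 [^] (P^(n-1)) \<in> Y" using s y0 sg_pow by blast
    ultimately show False using s(3) y0(2) by auto
  qed
  have F3: "\<exists>r\<in>carrier G. x = r [^] (P^n)" if x: "x \<in> H" "x [^] P = \<one>" for x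
  proof -
    obtain a::int where a: "x = h [^] a" using x H_def by auto
    have "x [^] P = y0 [^] (a*P) \<otimes> z0 [^] (P^2*a)"
      using a hpow cy cz by (simp add: int_pow_distrib int_pow_pow power2_eq_square mult_ac)
    with x have "z0 [^] (P^2*a) = inv (y0 [^] (a*P))"
      using cy cz by (metis int_pow_closed inv_equality m_comm)
    moreover have "inv (y0 [^] (a*P)) \<in> Y" using s y0 sg_pow subgroup.m_inv_closed by metis
    moreover have "z0 [^] (P^2*a) \<in> C" using s z0 sg_pow by blast
    ultimately have "z0 [^] (P^2*a) = \<one>" using s(3) by auto
    then obtain b where b: "a = P^n * b" using zord by auto
    have "y0 [^] a = \<one>" using b yexp y0 cy by (simp add: int_pow_pow[symmetric])
    then have "x = z0 [^] (P*a)" using a hpow cz by simp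
    also have "\<dots> = (z0 [^] (P*b)) [^] (P^n)" using b cz by (simp add: int_pow_pow mult_ac)
    finally show ?thesis using cz by blast
  qed
  assume "\<exists>S. direct_summand G S \<and> essential_in G {h [^] (k::int) |k. True} S"
  then obtain S T where ST: "internal_direct_sum G S T (carrier G)" and ess: "essential_in G H S"
    unfolding direct_summand_def H_def by blast
  note st = ids_basic[OF ST]
  have HS: "H \<subseteq> S" and ess2: "\<And>S'. subgroup S' G \<Longrightarrow> S' \<subseteq> S \<Longrightarrow> S' \<noteq> {\<one>} \<Longrightarrow> H \<inter> S' \<noteq> {\<one>}"
    using ess unfolding essential_in_def by auto
  have hS: "h \<in> S" using HS ch unfolding H_def by (metis (mono_tags, lifting) int_pow_1 mem_Collect_eq subsetD)
  obtain s t where stz: "s \<in> S" "t \<in> T" "z0 = s \<otimes> t" using ids_decomp[OF ST] cz by blast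
  have cs: "s \<in> carrier G" and ct: "t \<in> carrier G" using st stz subgroup.mem_carrier by metis+
  have h1: "h [^] (P^n) = s [^] (P*P^n) \<otimes> t [^] (P*P^n)"
    using hpow stz cs ct y0 yexp by (simp add: int_pow_distrib)
  have "t [^] (P*P^n) = inv (s [^] (P*P^n)) \<otimes> h [^] (P^n)"
    using h1 cs ct ch by (metis int_pow_closed inv_solve_left)
  moreover have "inv (s [^] (P*P^n)) \<otimes> h [^] (P^n) \<in> S"
    using st stz hS by (meson sg_pow subgroup.m_closed subgroup.m_inv_closed)
  moreover have "t [^] (P*P^n) \<in> T" using st stz sg_pow by blast
  ultimately have "t [^] (P*P^n) = \<one>" using st(3) by auto
  then have h2: "h [^] (P^n) = s [^] (P*P^n)" using h1 cs by simp
  define u where "u = h [^] (P^(n-1)) \<otimes> inv (s [^] (P^n))"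
  have cu: "u \<in> carrier G" using u_def ch cs by simp
  have uS: "u \<in> S" using u_def st stz hS by (meson sg_pow subgroup.m_closed subgroup.m_inv_closed)
  have "u [^] P = h [^] (P^(n-1)*P) \<otimes> inv (s [^] (P^n*P))"
    using u_def ch cs by (simp add: int_pow_distrib int_pow_pow int_pow_inv)
  also have "\<dots> = \<one>" using h2 Pn cs ch by (simp add: mult_ac)
  finally have up: "u [^] P = \<one>" .
  have u1: "u \<noteq> \<one>"
  proof
    assume "u = \<one>"
    then have "h [^] (P^(n-1)) = s [^] (P^n)" using u_def ch cs
      by (metis int_pow_closed inv_closed inv_inv local.inv_equality)
    then show False using F1 cs by blast
  qed
  define S' where "S' = {u [^] (k::int) |k. True}"
  have sgS': "subgroup S' G" using pow_subgroup[OF cu] S'_def by simp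
  have S'S: "S' \<subseteq> S" using S'_def st uS sg_pow by blast
  have uS': "u \<in> S'" using S'_def cu by (metis (mono_tags, lifting) int_pow_1 mem_Collect_eq)
  have "S' \<noteq> {\<one>}" using uS' u1 by blast
  then have "H \<inter> S' \<noteq> {\<one>}" using ess2 sgS' S'S by blast
  moreover have "\<one> \<in> H \<inter> S'" using H_def S'_def by (metis (mono_tags, lifting) IntI int_pow_0 mem_Collect_eq)
  ultimately obtain v where v: "v \<in> H" "v \<in> S'" "v \<noteq> \<one>" by blast
  obtain k::int where k: "v = u [^] k" using v S'_def by auto
  have nd: "\<not> P dvd k"
  proof
    assume "P dvd k" then obtain j where "k = P * j" by auto
    then have "v = (u [^] P) [^] j" using k cu by (simp add: int_pow_pow)
    then show False using up v by simp
  qed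
  have "coprime P k" using pr nd by (simp add: prime_imp_coprime)
  then have g1: "gcd k P = 1" by (simp add: coprime_commute)
  obtain a b where "a * k + b * P = gcd k P" using bezout_int by blast
  then have ab: "a * k + b * P = 1" using g1 by simp
  have "u = u [^] (a * k + b * P)" using ab cu by simp
  also have "\<dots> = u [^] (k * a) \<otimes> (u [^] P) [^] b" using cu by (simp add: int_pow_mult int_pow_pow mult_ac)
  also have "\<dots> = v [^] a" using k cu up by (simp add: int_pow_pow)
  finally have uv: "u = v [^] a" .
  obtain c::int where c: "v = h [^] c" using v H_def by auto
  have "u \<in> H" using uv c ch H_def by (auto simp: int_pow_pow)
  then obtain r where r: "r \<in> carrier G" "u = r [^] (P^n)" using F3 up by blast
  have "h [^] (P^(n-1)) = u \<otimes> s [^] (P^n)" using u_def ch cs by (simp add: m_assoc)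
  also have "\<dots> = (r \<otimes> s) [^] (P^n)" using r cs by (simp add: int_pow_distrib)
  finally show False using F1 r cs by blast
qed

end



context comm_group begin

lemma inj_mod:
  assumes sgH: "subgroup H G" and Pc: "\<And>g. g \<in> carrier G \<Longrightarrow> \<Phi> g \<in> carrier G"
  and qh: "\<And>a b. a \<in> carrier G \<Longrightarrow> b \<in> carrier G \<Longrightarrow> \<exists>c\<in>H. \<Phi> (a \<otimes> b) = \<Phi> a \<otimes> \<Phi> b \<otimes> c"
  and ker: "\<And>g. g \<in> carrier G \<Longrightarrow> \<Phi> g \<in> H \<Longrightarrow> g = \<one>"
  shows "\<exists>f. f \<in> hom G (G Mod H) \<and> inj_on f (carrier G)"
proof (intro exI conjI)
  have nH: "H \<lhd> G" using subgroup_imp_normal[OF sgH] .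
  have Hc: "H \<subseteq> carrier G" using sgH subgroup.subset by blast
  have Hin: "c \<in> carrier G" if "c \<in> H" for c using that Hc by blast
  show "(\<lambda>g. H #> \<Phi> g) \<in> hom G (G Mod H)"
  proof (rule homI)
    show "H #> \<Phi> x \<in> carrier (G Mod H)" if "x \<in> carrier G" for x
      using that Pc Hc by (simp add: FactGroup_def rcosetsI)
    show "H #> \<Phi> (x \<otimes> y) = (H #> \<Phi> x) \<otimes>\<^bsub>G Mod H\<^esub> (H #> \<Phi> y)"
      if x: "x \<in> carrier G" and y: "y \<in> carrier G" for x y
    proof -
      obtain c where c: "c \<in> H" "\<Phi> (x \<otimes> y) = \<Phi> x \<otimes> \<Phi> y \<otimes> c" using qh x y by blast
      have "H #> \<Phi> (x \<otimes> y) = H #> (c \<otimes> (\<Phi> x \<otimes> \<Phi> y))"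
        using c Pc x y Hin by (simp add: m_comm)
      also have "\<dots> = (H #> c) #> (\<Phi> x \<otimes> \<Phi> y)"
        using Hc c Pc x y Hin by (simp add: coset_mult_assoc)
      also have "\<dots> = H #> (\<Phi> x \<otimes> \<Phi> y)"
        using c sgH by (simp add: subgroup.rcos_const is_group)
      also have "\<dots> = (H #> \<Phi> x) <#> (H #> \<Phi> y)"
        using normal.rcos_sum[OF nH] Pc x y by simp
      finally show ?thesis by (simp add: FactGroup_def)
    qed
  qed
  show "inj_on (\<lambda>g. H #> \<Phi> g) (carrier G)"
  proof (rule inj_onI)
    fix a b assume a: "a \<in> carrier G" and b: "b \<in> carrier G" and eq: "H #> \<Phi> a = H #> \<Phi> b"
    have "\<Phi> a \<in> H #> \<Phi> b" using eq rcos_self[OF Pc[OF a] sgH] by simp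
    then have d: "\<Phi> a \<otimes> inv (\<Phi> b) \<in> H"
      using subgroup.rcos_module_imp[OF sgH is_group Pc[OF b]] by blast
    define c where "c = a \<otimes> inv b"
    have cc: "c \<in> carrier G" using c_def a b by simp
    have cb: "c \<otimes> b = a" using c_def a b by (simp add: m_assoc)
    obtain c1 where c1: "c1 \<in> H" "\<Phi> (c \<otimes> b) = \<Phi> c \<otimes> \<Phi> b \<otimes> c1" using qh cc b by blast
    have e: "\<Phi> a = \<Phi> c \<otimes> (\<Phi> b \<otimes> c1)" using c1 cb Pc cc b Hin by (simp add: m_assoc)
    have "\<Phi> c = \<Phi> a \<otimes> inv (\<Phi> b \<otimes> c1)"
      using e Pc cc b a Hin c1 by (simp add: inv_solve_right)
    also have "\<dots> = (\<Phi> a \<otimes> inv (\<Phi> b)) \<otimes> inv c1"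
      using Pc cc b a Hin c1 by (simp add: inv_mult m_assoc)
    finally have "\<Phi> c = (\<Phi> a \<otimes> inv (\<Phi> b)) \<otimes> inv c1" .
    moreover have "(\<Phi> a \<otimes> inv (\<Phi> b)) \<otimes> inv c1 \<in> H"
      using d c1 sgH by (meson subgroup.m_closed subgroup.m_inv_closed)
    ultimately have "c = \<one>" using ker cc by simp
    then show "a = b" using c_def a b by (metis cb cc l_one)
  qed
qed

end



context comm_group begin

lemma ids_sub: "internal_direct_sum G A B C \<Longrightarrow> x \<in> A \<Longrightarrow> x \<in> carrier G"
  using ids_basic subgroup.mem_carrier by metis

lemma ids_sub2: "internal_direct_sum G A B C \<Longrightarrow> x \<in> B \<Longrightarrow> x \<in> carrier G"
  using ids_basic subgroup.mem_carrier by metis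

lemma three_split:
  assumes XW: "internal_direct_sum G XX W (carrier G)" and YZ: "internal_direct_sum G Y Z XX"
  shows "internal_direct_sum G Y (Z <#> W) (carrier G)" "internal_direct_sum G Z W (Z <#> W)"
proof -
  note xw = ids_basic[OF XW] and yz = ids_basic[OF YZ]
  have sX: "XX \<subseteq> carrier G" "W \<subseteq> carrier G" "Y \<subseteq> carrier G" "Z \<subseteq> carrier G"
    using xw yz subgroup.subset by blast+
  have ZX: "Z \<subseteq> XX"
  proof
    fix z assume "z \<in> Z"
    then have "\<one> \<otimes> z \<in> XX" using ids_mem[OF YZ] yz subgroup.one_closed by blast
    then show "z \<in> XX" using \<open>z \<in> Z\<close> sX by auto
  qed
  have YX: "Y \<subseteq> XX"
  proof
    fix z assume "z \<in> Y"
    then have "z \<otimes> \<one> \<in> XX" using ids_mem[OF YZ] yz subgroup.one_closed by blast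
    then show "z \<in> XX" using \<open>z \<in> Y\<close> sX by auto
  qed
  have ZW: "Z \<inter> W = {\<one>}" using ZX xw(3) yz(2) subgroup.one_closed by blast
  show "internal_direct_sum G Z W (Z <#> W)"
    unfolding internal_direct_sum_def using yz xw ZW by simp
  have sC: "subgroup (Z <#> W) G" using mult_subgroups yz xw by blast
  have YC: "Y \<inter> (Z <#> W) = {\<one>}"
  proof
    show "Y \<inter> (Z <#> W) \<subseteq> {\<one>}"
    proof
      fix y assume "y \<in> Y \<inter> (Z <#> W)"
      then obtain z w where y: "y \<in> Y" "z \<in> Z" "w \<in> W" "y = z \<otimes> w"
        unfolding set_mult_def by auto
      have "y \<otimes> \<one> = z \<otimes> w" using y sX by auto
      then have "y = z" using ids_unique[OF XW, of y z \<one> w] y YX ZX xw subgroup.one_closed by blast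
      then show "y \<in> {\<one>}" using y yz by auto
    qed
    show "{\<one>} \<subseteq> Y \<inter> (Z <#> W)" using yz sC subgroup.one_closed by blast
  qed
  have "Y <#> (Z <#> W) = carrier G"
    using set_mult_assoc[of Y Z W] sX yz xw by simp
  then show "internal_direct_sum G Y (Z <#> W) (carrier G)"
    unfolding internal_direct_sum_def using yz sC YC by simp
qed

lemma build:
  fixes P :: int
  assumes XW: "internal_direct_sum G XX W (carrier G)" and YZ: "internal_direct_sum G Y Z XX"
  and pr: "Factorial_Ring.prime P" and n: "n > 0"
  and y0: "y0 \<in> Y" "y0 [^] (P^(n-1)) \<noteq> \<one>" and yexp: "\<forall>y\<in>Y. y [^] (P^n) = \<one>"
  and z0: "z0 \<in> Z" and zord: "\<forall>a::int. z0 [^] (P^2*a) = \<one> \<longrightarrow> P^n dvd a"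
  and hdef: "h = y0 \<otimes> z0 [^] P"
  and \<alpha>: "\<forall>y\<in>Y. \<alpha> y \<in> Y" "\<forall>y1\<in>Y. \<forall>y2\<in>Y. \<exists>c\<in>{h [^] (k::int) |k. True}. \<alpha> (y1 \<otimes> y2) = \<alpha> y1 \<otimes> \<alpha> y2 \<otimes> c"
  and \<beta>: "\<forall>z\<in>Z. \<beta> z \<in> Z" "\<forall>z1\<in>Z. \<forall>z2\<in>Z. \<exists>c\<in>{h [^] (k::int) |k. True}. \<beta> (z1 \<otimes> z2) = \<beta> z1 \<otimes> \<beta> z2 \<otimes> c"
  and inj: "\<forall>y\<in>Y. \<forall>z\<in>Z. \<forall>k::int. \<alpha> y = y0 [^] k \<longrightarrow> \<beta> z = z0 [^] (P*k) \<longrightarrow> y = \<one> \<and> z = \<one>"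
  shows "\<not> semi_generalized_bassian G"
proof
  assume sgb: "semi_generalized_bassian G"
  note D1 = three_split(1)[OF XW YZ] and D2 = three_split(2)[OF XW YZ]
  define C where "C = Z <#> W"
  note D1 = D1[folded C_def] and D2 = D2[folded C_def]
  define H where "H = {h [^] (k::int) |k. True}"
  have cy0: "y0 \<in> carrier G" using ids_sub[OF D1 y0(1)] .
  have cz0: "z0 \<in> carrier G" using ids_sub[OF D2 z0] .
  have "z0 \<otimes> \<one> \<in> C" using ids_mem[OF D2 z0 subgroup.one_closed[OF ids_basic(2)[OF D2]]] .
  then have z0C: "z0 \<in> C" using cz0 by simp
  have ch: "h \<in> carrier G" unfolding hdef using cy0 cz0 by (intro m_closed int_pow_closed)
  have sgH: "subgroup H G" unfolding H_def by (rule pow_subgroup[OF ch])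
  have Hin: "c \<in> carrier G" if "c \<in> H" for c using sgH that by (rule subgroup.mem_carrier)
  have ex: "\<exists>t. fst t \<in> Y \<and> fst (snd t) \<in> Z \<and> snd (snd t) \<in> W \<and> g = fst t \<otimes> (fst (snd t) \<otimes> snd (snd t))"
    if gg: "g \<in> carrier G" for g
  proof -
    obtain y c where "y \<in> Y" "c \<in> C" "g = y \<otimes> c" using ids_decomp[OF D1 gg] by blast
    moreover obtain z w where "z \<in> Z" "w \<in> W" "c = z \<otimes> w" using ids_decomp[OF D2 \<open>c \<in> C\<close>] by blast
    ultimately show ?thesis by (intro exI[of _ "(y,z,w)"]) auto
  qed
  have uniq: "y = y' \<and> z = z' \<and> w = w'"
    if "y \<in> Y" "z \<in> Z" "w \<in> W" "y' \<in> Y" "z' \<in> Z" "w' \<in> W" "y \<otimes> (z \<otimes> w) = y' \<otimes> (z' \<otimes> w')"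
    for y z w y' z' w'
  proof -
    have m1: "z \<otimes> w \<in> C" using ids_mem[OF D2 that(2) that(3)] .
    have m2: "z' \<otimes> w' \<in> C" using ids_mem[OF D2 that(5) that(6)] .
    have e: "y = y' \<and> z \<otimes> w = z' \<otimes> w'" using ids_unique[OF D1 that(1) that(4) m1 m2 that(7)] .
    then show ?thesis using ids_unique[OF D2 that(2) that(5) that(3) that(6)] by simp
  qed
  define dec where "dec g = (SOME t. fst t \<in> Y \<and> fst (snd t) \<in> Z \<and> snd (snd t) \<in> W \<and> g = fst t \<otimes> (fst (snd t) \<otimes> snd (snd t)))" for g
  define py where "py g = fst (dec g)" for g
  define pz where "pz g = fst (snd (dec g))" for g
  define pw where "pw g = snd (snd (dec g))" for g
  have pp: "py g \<in> Y" "pz g \<in> Z" "pw g \<in> W" "g = py g \<otimes> (pz g \<otimes> pw g)" if "g \<in> carrier G" for g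
  proof -
    have "fst (dec g) \<in> Y \<and> fst (snd (dec g)) \<in> Z \<and> snd (snd (dec g)) \<in> W \<and> g = fst (dec g) \<otimes> (fst (snd (dec g)) \<otimes> snd (snd (dec g)))"
      unfolding dec_def by (rule someI_ex[OF ex[OF that]])
    then show "py g \<in> Y" "pz g \<in> Z" "pw g \<in> W" "g = py g \<otimes> (pz g \<otimes> pw g)"
      unfolding py_def pz_def pw_def by auto
  qed
  have cY: "y \<in> carrier G" if "y \<in> Y" for y using ids_sub[OF D1] that .
  have cZ: "y \<in> carrier G" if "y \<in> Z" for y using ids_sub[OF D2] that .
  have cW: "y \<in> carrier G" if "y \<in> W" for y using ids_sub2[OF D2] that .
  have sY: "subgroup Y G" and sZ: "subgroup Z G" and sW: "subgroup W G"
    using ids_basic[OF D1] ids_basic[OF D2] by auto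
  have pmul: "py (a \<otimes> b) = py a \<otimes> py b \<and> pz (a \<otimes> b) = pz a \<otimes> pz b \<and> pw (a \<otimes> b) = pw a \<otimes> pw b"
    if a: "a \<in> carrier G" and b: "b \<in> carrier G" for a b
  proof (rule uniq)
    show "py (a \<otimes> b) \<in> Y" "pz (a \<otimes> b) \<in> Z" "pw (a \<otimes> b) \<in> W" using pp(1-3) a b by auto
    show "py a \<otimes> py b \<in> Y" using sY pp(1)[OF a] pp(1)[OF b] by (rule subgroup.m_closed)
    show "pz a \<otimes> pz b \<in> Z" using sZ pp(2)[OF a] pp(2)[OF b] by (rule subgroup.m_closed)
    show "pw a \<otimes> pw b \<in> W" using sW pp(3)[OF a] pp(3)[OF b] by (rule subgroup.m_closed)
    have "a \<otimes> b = (py a \<otimes> (pz a \<otimes> pw a)) \<otimes> (py b \<otimes> (pz b \<otimes> pw b))"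
      using pp(4)[OF a] pp(4)[OF b] by (rule arg_cong2[where f="(\<otimes>)"])
    also have "\<dots> = (py a \<otimes> py b) \<otimes> ((pz a \<otimes> pz b) \<otimes> (pw a \<otimes> pw b))"
      using pp(1-3) a b cY cZ cW by (simp add: m_ac)
    finally have e: "a \<otimes> b = py a \<otimes> py b \<otimes> (pz a \<otimes> pz b \<otimes> (pw a \<otimes> pw b))" .
    show "py (a \<otimes> b) \<otimes> (pz (a \<otimes> b) \<otimes> pw (a \<otimes> b)) = py a \<otimes> py b \<otimes> (pz a \<otimes> pz b \<otimes> (pw a \<otimes> pw b))"
      using trans[OF pp(4)[OF m_closed[OF a b], symmetric] e] .
  qed
  define \<Phi> where "\<Phi> g = \<alpha> (py g) \<otimes> (\<beta> (pz g) \<otimes> pw g)" for g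
  have Pc: "\<Phi> g \<in> carrier G" if "g \<in> carrier G" for g
  proof -
    have "\<alpha> (py g) \<in> Y" "\<beta> (pz g) \<in> Z" "pw g \<in> W" using \<alpha>(1) \<beta>(1) pp(1-3)[OF that] by auto
    then show ?thesis unfolding \<Phi>_def using cY cZ cW by (intro m_closed) auto
  qed
  have qh: "\<exists>c\<in>H. \<Phi> (a \<otimes> b) = \<Phi> a \<otimes> \<Phi> b \<otimes> c" if a: "a \<in> carrier G" and b: "b \<in> carrier G" for a b
  proof -
    obtain c1 where c1: "c1 \<in> H" "\<alpha> (py a \<otimes> py b) = \<alpha> (py a) \<otimes> \<alpha> (py b) \<otimes> c1"
      using \<alpha>(2)[rule_format, OF pp(1)[OF a] pp(1)[OF b]] unfolding H_def by blast
    obtain c2 where c2: "c2 \<in> H" "\<beta> (pz a \<otimes> pz b) = \<beta> (pz a) \<otimes> \<beta> (pz b) \<otimes> c2"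
      using \<beta>(2)[rule_format, OF pp(2)[OF a] pp(2)[OF b]] unfolding H_def by blast
    have cs: "\<alpha> (py a) \<in> carrier G" "\<alpha> (py b) \<in> carrier G" "\<beta> (pz a) \<in> carrier G" "\<beta> (pz b) \<in> carrier G"
      "pw a \<in> carrier G" "pw b \<in> carrier G" "c1 \<in> carrier G" "c2 \<in> carrier G"
      using pp(1-3)[OF a] pp(1-3)[OF b] \<alpha>(1) \<beta>(1) cY cZ cW Hin c1(1) c2(1) by auto
    have "\<Phi> (a \<otimes> b) = (\<alpha> (py a) \<otimes> \<alpha> (py b) \<otimes> c1) \<otimes> ((\<beta> (pz a) \<otimes> \<beta> (pz b) \<otimes> c2) \<otimes> (pw a \<otimes> pw b))"
      unfolding \<Phi>_def using pmul[OF a b] c1 c2 by simp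
    also have "\<dots> = \<Phi> a \<otimes> \<Phi> b \<otimes> (c1 \<otimes> c2)"
      unfolding \<Phi>_def using cs by (simp add: m_ac)
    finally show ?thesis using subgroup.m_closed[OF sgH c1(1) c2(1)] by blast
  qed
  have ker: "g = \<one>" if g: "g \<in> carrier G" and PH: "\<Phi> g \<in> H" for g
  proof -
    obtain k::int where k: "\<Phi> g = h [^] k" using PH H_def by auto
    have hk: "h [^] k = y0 [^] k \<otimes> (z0 [^] (P*k) \<otimes> \<one>)"
      using hdef cy0 cz0 by (simp add: int_pow_distrib int_pow_pow)
    have "\<alpha> (py g) = y0 [^] k \<and> \<beta> (pz g) = z0 [^] (P*k) \<and> pw g = \<one>"
    proof (rule uniq)
      show "\<alpha> (py g) \<in> Y" "\<beta> (pz g) \<in> Z" "pw g \<in> W" using \<alpha> \<beta> pp(1-3) g by auto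
      show "y0 [^] k \<in> Y" "z0 [^] (P*k) \<in> Z" "\<one> \<in> W"
        using y0 z0 sY sZ sW sg_pow subgroup.one_closed by auto
      show "\<alpha> (py g) \<otimes> (\<beta> (pz g) \<otimes> pw g) = y0 [^] k \<otimes> (z0 [^] (P * k) \<otimes> \<one>)"
        using k hk unfolding \<Phi>_def by simp
    qed
    then have "py g = \<one> \<and> pz g = \<one> \<and> pw g = \<one>" using inj pp(1-3) g by blast
    then have "py g \<otimes> (pz g \<otimes> pw g) = \<one>" by simp
    then show ?thesis using pp(4)[OF g] by simp
  qed
  obtain f where f: "f \<in> hom G (G Mod H)" "inj_on f (carrier G)"
    using inj_mod[OF sgH Pc qh ker] by blast
  then have "\<exists>S. direct_summand G S \<and> essential_in G H S"
    using sgb sgH unfolding semi_generalized_bassian_def by blast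
  then show False
    using not_ess[OF D1 pr n y0 yexp z0C zord hdef] H_def by simp
qed

end



context group begin

lemma get_inv_iso:
  assumes "subgroup S G" "G\<lparr>carrier := S\<rparr> \<cong> M"
  obtains \<psi> where "\<psi> \<in> iso M (G\<lparr>carrier := S\<rparr>)"
proof -
  obtain \<phi> where "\<phi> \<in> iso (G\<lparr>carrier := S\<rparr>) M" using assms(2) unfolding is_iso_def by blast
  then show ?thesis using group.iso_set_sym[OF subgroup_imp_group[OF assms(1)]] that by blast
qed

lemma tr_basic:
  assumes sS: "subgroup S G" and gM: "group M" and psi: "\<psi> \<in> iso M (G\<lparr>carrier := S\<rparr>)"
  shows "\<And>x. x \<in> carrier M \<Longrightarrow> \<psi> x \<in> S"
   "\<And>x y. x \<in> carrier M \<Longrightarrow> y \<in> carrier M \<Longrightarrow> \<psi> (x \<otimes>\<^bsub>M\<^esub> y) = \<psi> x \<otimes> \<psi> y"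
   "\<psi> ` carrier M = S" "inj_on \<psi> (carrier M)"
   "\<And>x k. x \<in> carrier M \<Longrightarrow> \<psi> (x [^]\<^bsub>M\<^esub> (k::int)) = \<psi> x [^] k"
   "\<psi> \<one>\<^bsub>M\<^esub> = \<one>"
proof -
  have gK: "group (G\<lparr>carrier := S\<rparr>)" using subgroup_imp_group[OF sS] .
  have hom: "\<psi> \<in> hom M (G\<lparr>carrier := S\<rparr>)" and bij: "bij_betw \<psi> (carrier M) S"
    using psi unfolding iso_def by auto
  show "\<And>x. x \<in> carrier M \<Longrightarrow> \<psi> x \<in> S" using hom unfolding hom_def by auto
  show "\<And>x y. x \<in> carrier M \<Longrightarrow> y \<in> carrier M \<Longrightarrow> \<psi> (x \<otimes>\<^bsub>M\<^esub> y) = \<psi> x \<otimes> \<psi> y"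
    using hom unfolding hom_def by auto
  show "\<psi> ` carrier M = S" "inj_on \<psi> (carrier M)" using bij unfolding bij_betw_def by auto
  show "\<psi> (x [^]\<^bsub>M\<^esub> (k::int)) = \<psi> x [^] k" if x: "x \<in> carrier M" for x k
  proof -
    have pS: "\<psi> x \<in> S" using hom x unfolding hom_def by (auto simp: Pi_def)
    have "\<psi> (x [^]\<^bsub>M\<^esub> k) = \<psi> x [^]\<^bsub>G\<lparr>carrier := S\<rparr>\<^esub> k" using hom_int_pow[OF hom x gM gK] .
    also have "\<dots> = \<psi> x [^] k" using int_pow_consistent[OF sS pS, of k] by simp
    finally show ?thesis .
  qed
  show "\<psi> \<one>\<^bsub>M\<^esub> = \<one>"
    using group_hom.hom_one[of M "G\<lparr>carrier := S\<rparr>" \<psi>] gM gK hom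
    by (simp add: group_hom_def group_hom_axioms_def)
qed

lemma tr_ord:
  assumes sS: "subgroup S G" and gM: "group M" and psi: "\<psi> \<in> iso M (G\<lparr>carrier := S\<rparr>)"
    and x: "x \<in> carrier M"
  shows "\<psi> x [^] (k::int) = \<one> \<longleftrightarrow> x [^]\<^bsub>M\<^esub> k = \<one>\<^bsub>M\<^esub>"
proof -
  note b = tr_basic[OF sS gM psi]
  have "\<psi> x [^] k = \<psi> (x [^]\<^bsub>M\<^esub> k)" using b(5)[OF x] by simp
  moreover have "\<psi> (x [^]\<^bsub>M\<^esub> k) = \<psi> \<one>\<^bsub>M\<^esub> \<longleftrightarrow> x [^]\<^bsub>M\<^esub> k = \<one>\<^bsub>M\<^esub>"
    using inj_on_eq_iff[OF b(4) group.int_pow_closed[OF gM x] monoid.one_closed[OF group.is_monoid[OF gM]]] .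
  ultimately show ?thesis using b(6) by simp
qed

lemma tr_exp:
  assumes sS: "subgroup S G" and gM: "group M" and psi: "\<psi> \<in> iso M (G\<lparr>carrier := S\<rparr>)"
    and e: "\<forall>x\<in>carrier M. x [^]\<^bsub>M\<^esub> (Q::int) = \<one>\<^bsub>M\<^esub>"
  shows "\<forall>y\<in>S. y [^] Q = \<one>"
proof
  fix y assume "y \<in> S"
  then obtain x where "x \<in> carrier M" "y = \<psi> x" using tr_basic(3)[OF sS gM psi] by blast
  then show "y [^] Q = \<one>" using tr_ord[OF sS gM psi] e by blast
qed

lemma tr_shift:
  assumes sS: "subgroup S G" and gM: "group M" and psi: "\<psi> \<in> iso M (G\<lparr>carrier := S\<rparr>)"
    and zh: "\<zeta> \<in> hom M M" and zi: "inj_on \<zeta> (carrier M)" and e: "e \<in> carrier M"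
    and ze: "\<forall>k::int. e [^]\<^bsub>M\<^esub> k \<in> \<zeta> ` carrier M \<longrightarrow> e [^]\<^bsub>M\<^esub> k = \<one>\<^bsub>M\<^esub>"
  shows "\<exists>\<xi>. (\<forall>y\<in>S. \<xi> y \<in> S) \<and> (\<forall>a\<in>S. \<forall>b\<in>S. \<xi> (a \<otimes> b) = \<xi> a \<otimes> \<xi> b) \<and> inj_on \<xi> S
     \<and> (\<forall>k::int. \<psi> e [^] k \<in> \<xi> ` S \<longrightarrow> \<psi> e [^] k = \<one>)"
proof -
  note b = tr_basic[OF sS gM psi]
  define \<phi> where "\<phi> = inv_into (carrier M) \<psi>"
  have bij: "bij_betw \<psi> (carrier M) S" using b(3,4) by (simp add: bij_betw_def)
  have \<phi>1: "\<phi> y \<in> carrier M" "\<psi> (\<phi> y) = y" if "y \<in> S" for y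
    using that bij unfolding \<phi>_def by (auto simp: bij_betw_inv_into_right inv_into_into b(3)[symmetric])
  have \<phi>2: "\<phi> (\<psi> x) = x" if "x \<in> carrier M" for x using that b(4) unfolding \<phi>_def by simp
  have zc: "\<zeta> x \<in> carrier M" if "x \<in> carrier M" for x using zh that unfolding hom_def by auto
  have zm: "\<zeta> (x \<otimes>\<^bsub>M\<^esub> y) = \<zeta> x \<otimes>\<^bsub>M\<^esub> \<zeta> y" if "x \<in> carrier M" "y \<in> carrier M" for x y
    using zh that unfolding hom_def by auto
  define \<xi> where "\<xi> y = \<psi> (\<zeta> (\<phi> y))" for y
  show ?thesis
  proof (intro exI[of _ \<xi>] conjI ballI allI impI)
    show "\<xi> y \<in> S" if "y \<in> S" for y unfolding \<xi>_def using that \<phi>1 zc b(1) by auto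
    show "\<xi> (a \<otimes> c) = \<xi> a \<otimes> \<xi> c" if "a \<in> S" "c \<in> S" for a c
    proof -
      have "\<phi> (a \<otimes> c) = \<phi> a \<otimes>\<^bsub>M\<^esub> \<phi> c"
      proof -
        have "a \<otimes> c = \<psi> (\<phi> a \<otimes>\<^bsub>M\<^esub> \<phi> c)" using b(2) \<phi>1 that by simp
        then show ?thesis using \<phi>2 \<phi>1 that gM by (metis group.is_monoid monoid.m_closed)
      qed
      then show ?thesis unfolding \<xi>_def using that \<phi>1 zm zc b(2) by simp
    qed
    show "inj_on \<xi> S"
    proof (rule inj_onI)
      fix a c assume "a \<in> S" "c \<in> S" "\<xi> a = \<xi> c"
      then have "\<zeta> (\<phi> a) = \<zeta> (\<phi> c)" unfolding \<xi>_def using b(4) \<phi>1 zc by (meson inj_onD)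
      then have "\<phi> a = \<phi> c" using zi \<phi>1 \<open>a \<in> S\<close> \<open>c \<in> S\<close> by (meson inj_onD)
      then show "a = c" using \<phi>1 \<open>a \<in> S\<close> \<open>c \<in> S\<close> by metis
    qed
    fix k :: int assume "\<psi> e [^] k \<in> \<xi> ` S"
    then obtain y where y: "y \<in> S" "\<psi> e [^] k = \<psi> (\<zeta> (\<phi> y))" unfolding \<xi>_def by auto
    have "\<psi> (e [^]\<^bsub>M\<^esub> k) = \<psi> (\<zeta> (\<phi> y))" using y b(5)[OF e] by simp
    then have "e [^]\<^bsub>M\<^esub> k = \<zeta> (\<phi> y)" using b(4) e y \<phi>1 zc gM
      by (meson group.int_pow_closed inj_onD)
    then have "e [^]\<^bsub>M\<^esub> k = \<one>\<^bsub>M\<^esub>" using ze \<phi>1 y by blast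
    then show "\<psi> e [^] k = \<one>" using tr_ord[OF sS gM psi e] by simp
  qed
qed

lemma tr_div:
  assumes sS: "subgroup S G" and gM: "group M" and psi: "\<psi> \<in> iso M (G\<lparr>carrier := S\<rparr>)"
    and d: "\<forall>x\<in>carrier M. \<exists>w\<in>carrier M. w [^]\<^bsub>M\<^esub> (Q::int) = x"
  shows "\<forall>z\<in>S. \<exists>w\<in>S. w [^] Q = z"
proof
  note b = tr_basic[OF sS gM psi]
  fix z assume "z \<in> S"
  then obtain x where x: "x \<in> carrier M" "z = \<psi> x" using b(3) by blast
  then obtain w where "w \<in> carrier M" "w [^]\<^bsub>M\<^esub> Q = x" using d by blast
  then show "\<exists>w\<in>S. w [^] Q = z" using b(1,5) x by metis
qed

lemma tr_soc:
  assumes sS: "subgroup S G" and gM: "group M" and psi: "\<psi> \<in> iso M (G\<lparr>carrier := S\<rparr>)"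
    and e: "e \<in> carrier M"
    and so: "\<forall>c\<in>carrier M. c [^]\<^bsub>M\<^esub> (P::int) = \<one>\<^bsub>M\<^esub> \<longrightarrow> (\<exists>j::int. c = e [^]\<^bsub>M\<^esub> (Q * j))"
  shows "\<forall>c\<in>S. c [^] P = \<one> \<longrightarrow> (\<exists>j::int. c = \<psi> e [^] (Q * j))"
proof (intro ballI impI)
  note b = tr_basic[OF sS gM psi]
  fix c assume "c \<in> S" "c [^] P = \<one>"
  then obtain x where x: "x \<in> carrier M" "c = \<psi> x" using b(3) by blast
  then have "x [^]\<^bsub>M\<^esub> P = \<one>\<^bsub>M\<^esub>" using tr_ord[OF sS gM psi x(1)] \<open>c [^] P = \<one>\<close> by simp
  then obtain j where "x = e [^]\<^bsub>M\<^esub> (Q * j)" using so x by blast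
  then show "\<exists>j::int. c = \<psi> e [^] (Q * j)" using b(5)[OF e] x by metis
qed

end



definition dyad :: "nat \<Rightarrow> rat \<Rightarrow> bool" where
  "dyad p x \<longleftrightarrow> (\<exists>(a::int) (k::nat). x = of_int a / of_nat (p ^ k))"

lemma carrier_qc: "carrier (quasicyclic_group p) = {x. 0 \<le> x \<and> x < 1 \<and> dyad p x}"
  by (simp add: quasicyclic_group_def dyad_def)

lemma mult_qc [simp]: "monoid.mult (quasicyclic_group p) x y = frac (x + y)"
  by (simp add: quasicyclic_group_def)

lemma one_qc [simp]: "one (quasicyclic_group p) = 0"
  by (simp add: quasicyclic_group_def)

lemma dyad_add: assumes "p > 0" "dyad p x" "dyad p y" shows "dyad p (x + y)"
proof -
  obtain a k b l where xe: "x = of_int a / of_nat (p ^ k)" and ye: "y = of_int b / of_nat (p ^ l)"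
    using assms unfolding dyad_def by blast
  have "x + y = of_int (a * int (p^l) + b * int (p^k)) / of_nat (p ^ (k + l))"
    unfolding xe ye using assms(1) by (simp add: field_simps power_add)
  then show ?thesis unfolding dyad_def by blast
qed

lemma dyad_int: "dyad p (of_int a)"
  unfolding dyad_def by (rule exI[of _ a], rule exI[of _ 0]) simp

lemma dyad_neg: "dyad p x \<Longrightarrow> dyad p (- x)"
  unfolding dyad_def by (metis minus_divide_left of_int_minus)

lemma dyad_frac: assumes "p > 0" "dyad p x" shows "dyad p (frac x)"
proof -
  show ?thesis using dyad_add[OF assms dyad_int[of p "- \<lfloor>x\<rfloor>"]] by (simp add: frac_def)
qed

lemma qc_closed: "p > 0 \<Longrightarrow> x \<in> carrier (quasicyclic_group p) \<Longrightarrow> y \<in> carrier (quasicyclic_group p)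
   \<Longrightarrow> frac (x + y) \<in> carrier (quasicyclic_group p)"
  by (simp add: carrier_qc frac_lt_1 dyad_frac dyad_add)

lemma group_qc: assumes p: "p > 0" shows "group (quasicyclic_group p)"
proof (rule groupI)
  show "x \<otimes>\<^bsub>quasicyclic_group p\<^esub> y \<in> carrier (quasicyclic_group p)"
    if "x \<in> carrier (quasicyclic_group p)" "y \<in> carrier (quasicyclic_group p)" for x y
    using qc_closed[OF p that] by simp
  show "\<one>\<^bsub>quasicyclic_group p\<^esub> \<in> carrier (quasicyclic_group p)"
    using dyad_int[of p 0] by (simp add: carrier_qc)
  show "x \<otimes>\<^bsub>quasicyclic_group p\<^esub> y \<otimes>\<^bsub>quasicyclic_group p\<^esub> z =
        x \<otimes>\<^bsub>quasicyclic_group p\<^esub> (y \<otimes>\<^bsub>quasicyclic_group p\<^esub> z)" for x y z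
    by (simp add: add.assoc)
  show "\<one>\<^bsub>quasicyclic_group p\<^esub> \<otimes>\<^bsub>quasicyclic_group p\<^esub> x = x"
    if "x \<in> carrier (quasicyclic_group p)" for x
    using that by (simp add: carrier_qc frac_eq)
  show "\<exists>y\<in>carrier (quasicyclic_group p). y \<otimes>\<^bsub>quasicyclic_group p\<^esub> x = \<one>\<^bsub>quasicyclic_group p\<^esub>"
    if "x \<in> carrier (quasicyclic_group p)" for x
  proof (rule bexI[of _ "frac (- x)"])
    show "frac (- x) \<otimes>\<^bsub>quasicyclic_group p\<^esub> x = \<one>\<^bsub>quasicyclic_group p\<^esub>" by simp
    show "frac (- x) \<in> carrier (quasicyclic_group p)"
      using that p by (simp add: carrier_qc frac_lt_1 dyad_frac dyad_neg)
  qed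
qed

lemma qc_nat_pow: assumes "x \<in> carrier (quasicyclic_group p)"
  shows "x [^]\<^bsub>quasicyclic_group p\<^esub> (n::nat) = frac (of_nat n * x)"
proof (induction n)
  case 0 then show ?case by simp
next
  case (Suc n)
  then show ?case by (simp add: algebra_simps)
qed

lemma qc_inv: assumes "p > 0" "x \<in> carrier (quasicyclic_group p)"
  shows "inv\<^bsub>quasicyclic_group p\<^esub> x = frac (- x)"
proof (rule group.inv_equality[OF group_qc[OF assms(1)]])
  show "frac (- x) \<otimes>\<^bsub>quasicyclic_group p\<^esub> x = \<one>\<^bsub>quasicyclic_group p\<^esub>" by simp
  show "x \<in> carrier (quasicyclic_group p)" by fact
  show "frac (- x) \<in> carrier (quasicyclic_group p)"
    using assms by (simp add: carrier_qc frac_lt_1 dyad_frac dyad_neg)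
qed

lemma qc_int_pow: assumes "p > 0" "x \<in> carrier (quasicyclic_group p)"
  shows "x [^]\<^bsub>quasicyclic_group p\<^esub> (k::int) = frac (of_int k * x)"
proof (cases "k < 0")
  case True
  have c: "frac (of_nat (nat (- k)) * x) \<in> carrier (quasicyclic_group p)"
    using monoid.nat_pow_closed[OF group.is_monoid[OF group_qc[OF assms(1)]] assms(2), of "nat (- k)"]
    by (simp add: qc_nat_pow[OF assms(2)])
  have "x [^]\<^bsub>quasicyclic_group p\<^esub> k = frac (- frac (of_nat (nat (- k)) * x))"
    using True assms qc_nat_pow[OF assms(2)] qc_inv[OF assms(1) c] by (simp add: int_pow_def2)
  also have "\<dots> = frac (of_int k * x)" using True by (simp add: frac_neg_frac)
  finally show ?thesis .
next
  case False
  then show ?thesis using qc_nat_pow[OF assms(2)] by (simp add: int_pow_def2)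
qed

lemma rat_int_div_Ints: assumes "q \<noteq> 0" shows "(of_int k / of_int q :: rat) \<in> \<int> \<longleftrightarrow> q dvd k"
proof
  assume "of_int k / of_int q \<in> (\<int> :: rat set)"
  then obtain j where "of_int k / of_int q = (of_int j :: rat)" by (auto elim: Ints_cases)
  then have "(of_int k :: rat) = of_int (q * j)" using assms by (simp add: field_simps)
  then show "q dvd k" by (simp only: of_int_eq_iff) simp
next
  assume "q dvd k"
  then obtain j where "k = q * j" by auto
  then show "of_int k / of_int q \<in> (\<int> :: rat set)" using assms by simp
qed




lemma sg_carrier: "group K \<Longrightarrow> carrier (sum_group I (\<lambda>_. K)) = {x \<in> \<Pi>\<^sub>E i\<in>I. carrier K. finite {i \<in> I. x i \<noteq> \<one>\<^bsub>K\<^esub>}}"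
  by (rule carrier_sum_group) (simp add: group.is_monoid)

lemma sg_group: "group K \<Longrightarrow> group (sum_group I (\<lambda>_. K))"
  by (rule sum_group) simp

lemma sg_proj_hom: assumes K: "group K" and i: "i \<in> I"
  shows "(\<lambda>x. x i) \<in> hom (sum_group I (\<lambda>_. K)) K"
  by (rule homI) (use i in \<open>auto simp: sg_carrier[OF K]\<close>)

lemma sg_pow: assumes K: "group K" and x: "x \<in> carrier (sum_group I (\<lambda>_. K))" and i: "i \<in> I"
  shows "(x [^]\<^bsub>sum_group I (\<lambda>_. K)\<^esub> (k::int)) i = x i [^]\<^bsub>K\<^esub> k"
  using hom_int_pow[OF sg_proj_hom[OF K i] x sg_group[OF K] K] .

lemma sg_eq_one: assumes K: "group K" and x: "x \<in> carrier (sum_group I (\<lambda>_. K))"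
  shows "x = \<one>\<^bsub>sum_group I (\<lambda>_. K)\<^esub> \<longleftrightarrow> (\<forall>i\<in>I. x i = \<one>\<^bsub>K\<^esub>)"
proof -
  have "x \<in> extensional I" using x by (auto simp: sg_carrier[OF K] PiE_def)
  then show ?thesis by (auto simp: extensional_def)
qed

definition unitv :: "'i set \<Rightarrow> ('a, 'b) monoid_scheme \<Rightarrow> 'i \<Rightarrow> 'a \<Rightarrow> 'i \<Rightarrow> 'a" where
  "unitv I K i0 a = (\<lambda>j\<in>I. if j = i0 then a else \<one>\<^bsub>K\<^esub>)"

lemma unitv_carrier: assumes K: "group K" and "a \<in> carrier K"
  shows "unitv I K i0 a \<in> carrier (sum_group I (\<lambda>_. K))"
proof -
  have "{i \<in> I. unitv I K i0 a i \<noteq> \<one>\<^bsub>K\<^esub>} \<subseteq> {i0}" by (auto simp: unitv_def)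
  then have "finite {i \<in> I. unitv I K i0 a i \<noteq> \<one>\<^bsub>K\<^esub>}" by (rule finite_subset) simp
  then show ?thesis using assms by (auto simp: sg_carrier[OF K] unitv_def group.is_monoid monoid.one_closed)
qed

lemma unitv_pow_one: assumes K: "group K" and a: "a \<in> carrier K" and i0: "i0 \<in> I"
  shows "unitv I K i0 a [^]\<^bsub>sum_group I (\<lambda>_. K)\<^esub> (k::int) = \<one>\<^bsub>sum_group I (\<lambda>_. K)\<^esub>
     \<longleftrightarrow> a [^]\<^bsub>K\<^esub> k = \<one>\<^bsub>K\<^esub>"
proof -
  note uc = unitv_carrier[OF K a, of I i0]
  have pc: "unitv I K i0 a [^]\<^bsub>sum_group I (\<lambda>_. K)\<^esub> k \<in> carrier (sum_group I (\<lambda>_. K))"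
    using group.int_pow_closed[OF sg_group[OF K] uc] .
  have comp: "(unitv I K i0 a [^]\<^bsub>sum_group I (\<lambda>_. K)\<^esub> k) i = (if i = i0 then a [^]\<^bsub>K\<^esub> k else \<one>\<^bsub>K\<^esub>)"
    if "i \<in> I" for i
    using sg_pow[OF K uc that, of k] that group.int_pow_one[OF K] by (simp add: unitv_def)
  have "(\<forall>i\<in>I. (unitv I K i0 a [^]\<^bsub>sum_group I (\<lambda>_. K)\<^esub> k) i = \<one>\<^bsub>K\<^esub>) \<longleftrightarrow> a [^]\<^bsub>K\<^esub> k = \<one>\<^bsub>K\<^esub>"
    using i0 comp by auto
  then show ?thesis using sg_eq_one[OF K pc] by simp
qed

lemma inj_shift_exists: assumes "infinite I"
  shows "\<exists>\<sigma> i0. i0 \<in> I \<and> \<sigma> ` I \<subseteq> I \<and> inj_on \<sigma> I \<and> i0 \<notin> \<sigma> ` I"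
proof -
  obtain f :: "nat \<Rightarrow> _" where f: "inj f" "range f \<subseteq> I" using infinite_countable_subset[OF assms] by blast
  define \<sigma> where "\<sigma> i = (if i \<in> range f then f (Suc (inv_into UNIV f i)) else i)" for i
  have "f 0 \<in> I" using f by auto
  moreover have "\<sigma> ` I \<subseteq> I" using f by (auto simp: \<sigma>_def)
  moreover have "inj_on \<sigma> I"
  proof (rule inj_onI)
    fix x y assume "x \<in> I" "y \<in> I" "\<sigma> x = \<sigma> y"
    then show "x = y" using f(1) unfolding \<sigma>_def
      by (auto split: if_splits simp: inj_eq)
  qed
  moreover have "f 0 \<notin> \<sigma> ` I" using f(1) by (auto simp: \<sigma>_def inj_eq)
  ultimately show ?thesis by blast
qed

lemma shift_sum: assumes K: "group K" and I: "infinite I"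
  shows "\<exists>i0\<in>I. \<exists>\<zeta>. \<zeta> \<in> hom (sum_group I (\<lambda>_. K)) (sum_group I (\<lambda>_. K))
     \<and> inj_on \<zeta> (carrier (sum_group I (\<lambda>_. K)))
     \<and> (\<forall>x\<in>carrier (sum_group I (\<lambda>_. K)). \<zeta> x i0 = \<one>\<^bsub>K\<^esub>)"
proof -
  obtain \<sigma> i0 where s: "i0 \<in> I" "\<sigma> ` I \<subseteq> I" "inj_on \<sigma> I" "i0 \<notin> \<sigma> ` I"
    using inj_shift_exists[OF I] by blast
  define \<tau> where "\<tau> = inv_into I \<sigma>"
  have \<tau>1: "\<tau> (\<sigma> i) = i" if "i \<in> I" for i using s(3) that unfolding \<tau>_def by simp
  have \<tau>2: "\<tau> j \<in> I" if "j \<in> \<sigma> ` I" for j using that unfolding \<tau>_def by (simp add: inv_into_into)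
  define \<zeta> where "\<zeta> x = (\<lambda>j\<in>I. if j \<in> \<sigma> ` I then x (\<tau> j) else \<one>\<^bsub>K\<^esub>)" for x :: "_ \<Rightarrow> _"
  let ?M = "sum_group I (\<lambda>_. K)"
  have mon: "monoid K" using K group.is_monoid by blast
  have zc: "\<zeta> x \<in> carrier ?M" if x: "x \<in> carrier ?M" for x
  proof -
    have x1: "x \<in> (\<Pi>\<^sub>E i\<in>I. carrier K)" "finite {i \<in> I. x i \<noteq> \<one>\<^bsub>K\<^esub>}" using x by (auto simp: sg_carrier[OF K])
    have "{j \<in> I. \<zeta> x j \<noteq> \<one>\<^bsub>K\<^esub>} \<subseteq> \<sigma> ` {i \<in> I. x i \<noteq> \<one>\<^bsub>K\<^esub>}"
    proof
      fix j assume "j \<in> {j \<in> I. \<zeta> x j \<noteq> \<one>\<^bsub>K\<^esub>}"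
      then have j: "j \<in> I" "j \<in> \<sigma> ` I" "x (\<tau> j) \<noteq> \<one>\<^bsub>K\<^esub>" unfolding \<zeta>_def by (auto split: if_splits)
      then obtain i where "i \<in> I" "j = \<sigma> i" by auto
      then show "j \<in> \<sigma> ` {i \<in> I. x i \<noteq> \<one>\<^bsub>K\<^esub>}" using j \<tau>1 by auto
    qed
    then have "finite {j \<in> I. \<zeta> x j \<noteq> \<one>\<^bsub>K\<^esub>}" using x1(2) finite_subset by blast
    moreover have "\<zeta> x \<in> (\<Pi>\<^sub>E i\<in>I. carrier K)" using x1(1) \<tau>1 \<tau>2 mon unfolding \<zeta>_def by (auto simp: monoid.one_closed PiE_iff)
    ultimately show ?thesis by (simp add: sg_carrier[OF K])
  qed
  show ?thesis
  proof (intro bexI[OF _ s(1)] exI[of _ \<zeta>] conjI ballI)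
    show "\<zeta> \<in> hom ?M ?M"
    proof (rule homI)
      show "\<zeta> x \<in> carrier ?M" if "x \<in> carrier ?M" for x using zc that .
      show "\<zeta> (x \<otimes>\<^bsub>?M\<^esub> y) = \<zeta> x \<otimes>\<^bsub>?M\<^esub> \<zeta> y" if "x \<in> carrier ?M" "y \<in> carrier ?M" for x y
        using \<tau>2 mon by (auto simp: \<zeta>_def fun_eq_iff monoid.l_one monoid.one_closed)
    qed
    show "inj_on \<zeta> (carrier ?M)"
    proof (rule inj_onI)
      fix x y assume x: "x \<in> carrier ?M" and y: "y \<in> carrier ?M" and e: "\<zeta> x = \<zeta> y"
      have "x i = y i" if i: "i \<in> I" for i
      proof -
        have "\<sigma> i \<in> I" "\<sigma> i \<in> \<sigma> ` I" using s(2) i by auto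
        then have "\<zeta> x (\<sigma> i) = x i" "\<zeta> y (\<sigma> i) = y i" unfolding \<zeta>_def using \<tau>1[OF i] by auto
        then show ?thesis using e by simp
      qed
      moreover have "x \<in> extensional I" "y \<in> extensional I" using x y by (auto simp: sg_carrier[OF K] PiE_def)
      ultimately show "x = y" by (rule extensionalityI[rotated 2]) auto
    qed
    show "\<zeta> x i0 = \<one>\<^bsub>K\<^esub>" for x using s(1,4) unfolding \<zeta>_def by simp
  qed
qed

lemma shift_unitv: assumes K: "group K" and I: "infinite I"
  shows "\<exists>i0\<in>I. \<exists>\<zeta>. \<zeta> \<in> hom (sum_group I (\<lambda>_. K)) (sum_group I (\<lambda>_. K))
     \<and> inj_on \<zeta> (carrier (sum_group I (\<lambda>_. K)))
     \<and> (\<forall>a\<in>carrier K. \<forall>k::int. unitv I K i0 a [^]\<^bsub>sum_group I (\<lambda>_. K)\<^esub> k \<in> \<zeta> ` carrier (sum_group I (\<lambda>_. K))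
          \<longrightarrow> unitv I K i0 a [^]\<^bsub>sum_group I (\<lambda>_. K)\<^esub> k = \<one>\<^bsub>sum_group I (\<lambda>_. K)\<^esub>)"
proof -
  obtain i0 \<zeta> where z: "i0 \<in> I" "\<zeta> \<in> hom (sum_group I (\<lambda>_. K)) (sum_group I (\<lambda>_. K))"
     "inj_on \<zeta> (carrier (sum_group I (\<lambda>_. K)))" "\<forall>x\<in>carrier (sum_group I (\<lambda>_. K)). \<zeta> x i0 = \<one>\<^bsub>K\<^esub>"
    using shift_sum[OF K I] by blast
  show ?thesis
  proof (intro bexI[OF _ z(1)] exI[of _ \<zeta>] conjI ballI allI impI z(2) z(3))
    fix a and k :: int assume a: "a \<in> carrier K"
      and im: "unitv I K i0 a [^]\<^bsub>sum_group I (\<lambda>_. K)\<^esub> k \<in> \<zeta> ` carrier (sum_group I (\<lambda>_. K))"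
    note uc = unitv_carrier[OF K a, of I i0]
    have "(unitv I K i0 a [^]\<^bsub>sum_group I (\<lambda>_. K)\<^esub> k) i0 = \<one>\<^bsub>K\<^esub>" using im z(4) by auto
    then have "a [^]\<^bsub>K\<^esub> k = \<one>\<^bsub>K\<^esub>" using sg_pow[OF K uc z(1)] z(1) by (simp add: unitv_def)
    then show "unitv I K i0 a [^]\<^bsub>sum_group I (\<lambda>_. K)\<^esub> k = \<one>\<^bsub>sum_group I (\<lambda>_. K)\<^esub>"
      using unitv_pow_one[OF K a z(1)] by simp
  qed
qed




lemma im_one_carrier: "p > 1 \<Longrightarrow> N > 0 \<Longrightarrow> (1::int) \<in> carrier (integer_mod_group (p ^ N))"
proof -
  assume "p > 1" "N > 0"
  then have "p ^ N > 1" using one_less_power[of p N] by simp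
  then show ?thesis using \<open>p > 1\<close> \<open>N > 0\<close> by simp
qed

lemma im_one_pow: "(1::int) [^]\<^bsub>integer_mod_group (p ^ N)\<^esub> (k::int) = \<one>\<^bsub>integer_mod_group (p ^ N)\<^esub>
    \<longleftrightarrow> int p ^ N dvd k"
  by (simp add: int_pow_integer_mod_group dvd_eq_mod_eq_0)

lemma im_exp: "\<forall>x\<in>carrier (integer_mod_group (p ^ N)).
    x [^]\<^bsub>integer_mod_group (p ^ N)\<^esub> (int p ^ N) = \<one>\<^bsub>integer_mod_group (p ^ N)\<^esub>"
  by (simp add: int_pow_integer_mod_group)

lemma sg_exp: assumes K: "group K" and e: "\<forall>x\<in>carrier K. x [^]\<^bsub>K\<^esub> (Q::int) = \<one>\<^bsub>K\<^esub>"
  shows "\<forall>x\<in>carrier (sum_group I (\<lambda>_. K)). x [^]\<^bsub>sum_group I (\<lambda>_. K)\<^esub> Q = \<one>\<^bsub>sum_group I (\<lambda>_. K)\<^esub>"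
proof
  fix x assume x: "x \<in> carrier (sum_group I (\<lambda>_. K))"
  have pc: "x [^]\<^bsub>sum_group I (\<lambda>_. K)\<^esub> Q \<in> carrier (sum_group I (\<lambda>_. K))"
    using group.int_pow_closed[OF sg_group[OF K] x] .
  have "\<forall>i\<in>I. (x [^]\<^bsub>sum_group I (\<lambda>_. K)\<^esub> Q) i = \<one>\<^bsub>K\<^esub>"
  proof
    fix i assume i: "i \<in> I"
    have "x i \<in> carrier K" using x i by (auto simp: sg_carrier[OF K])
    then show "(x [^]\<^bsub>sum_group I (\<lambda>_. K)\<^esub> Q) i = \<one>\<^bsub>K\<^esub>" using sg_pow[OF K x i] e by simp
  qed
  then show "x [^]\<^bsub>sum_group I (\<lambda>_. K)\<^esub> Q = \<one>\<^bsub>sum_group I (\<lambda>_. K)\<^esub>" using sg_eq_one[OF K pc] by simp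
qed

lemma qc_e_carrier: assumes "p > 1" "N > 0"
  shows "(1 / of_nat (p ^ N) :: rat) \<in> carrier (quasicyclic_group p)"
proof -
  have "p ^ N > 1" using assms one_less_power[of p N] by simp
  then have "(1::rat) < of_nat (p ^ N)" by (metis of_nat_1 of_nat_less_iff)
  then have "(1 / of_nat (p ^ N) :: rat) < 1" by (simp add: divide_less_eq)
  moreover have "dyad p (1 / of_nat (p ^ N))" unfolding dyad_def
    by (rule exI[of _ 1], rule exI[of _ N]) simp
  ultimately show ?thesis by (simp add: carrier_qc)
qed

lemma qc_e_pow: assumes "p > 1" "N > 0"
  shows "(1 / of_nat (p ^ N) :: rat) [^]\<^bsub>quasicyclic_group p\<^esub> (k::int) = \<one>\<^bsub>quasicyclic_group p\<^esub>
    \<longleftrightarrow> int p ^ N dvd k"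
proof -
  have "(1 / of_nat (p ^ N) :: rat) [^]\<^bsub>quasicyclic_group p\<^esub> k = frac (of_int k / of_int (int p ^ N))"
    using qc_int_pow[OF _ qc_e_carrier[OF assms]] assms by simp
  moreover have "int p ^ N \<noteq> 0" using assms by simp
  ultimately show ?thesis using rat_int_div_Ints[of "int p ^ N" k] by simp
qed

lemma qc_div: assumes p: "p > 1"
  shows "\<forall>x\<in>carrier (quasicyclic_group p). \<exists>w\<in>carrier (quasicyclic_group p). w [^]\<^bsub>quasicyclic_group p\<^esub> (int p) = x"
proof
  fix x assume x: "x \<in> carrier (quasicyclic_group p)"
  then obtain a k where xk: "0 \<le> x" "x < 1" "x = of_int a / of_nat (p ^ k)" by (auto simp: carrier_qc dyad_def)
  define w where "w = x / of_nat p"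
  have "0 \<le> w" using xk(1) by (simp add: w_def)
  moreover have "w < 1" using xk(2) p by (simp add: w_def divide_less_eq)
  moreover have "dyad p w" unfolding dyad_def w_def using xk p
    by (intro exI[of _ a] exI[of _ "Suc k"]) (simp add: field_simps)
  ultimately have wc: "w \<in> carrier (quasicyclic_group p)" by (simp add: carrier_qc)
  have "w [^]\<^bsub>quasicyclic_group p\<^esub> (int p) = frac (of_nat p * w)" using qc_int_pow[OF _ wc] p by simp
  also have "\<dots> = x" using p xk by (simp add: w_def frac_eq)
  finally show "\<exists>w\<in>carrier (quasicyclic_group p). w [^]\<^bsub>quasicyclic_group p\<^esub> (int p) = x" using wc by blast
qed

lemma qc_soc: assumes p: "p > 1" and N: "N > 0"
  shows "\<forall>c\<in>carrier (quasicyclic_group p). c [^]\<^bsub>quasicyclic_group p\<^esub> (int p) = \<one>\<^bsub>quasicyclic_group p\<^esub>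
     \<longrightarrow> (\<exists>j::int. c = (1 / of_nat (p ^ N) :: rat) [^]\<^bsub>quasicyclic_group p\<^esub> (int p ^ (N - 1) * j))"
proof (intro ballI impI)
  fix c assume c: "c \<in> carrier (quasicyclic_group p)" and cp: "c [^]\<^bsub>quasicyclic_group p\<^esub> (int p) = \<one>\<^bsub>quasicyclic_group p\<^esub>"
  have c01: "0 \<le> c" "c < 1" using c by (auto simp: carrier_qc)
  have "frac (of_nat p * c) = 0" using cp qc_int_pow[OF _ c] p by simp
  then obtain j where j: "of_nat p * c = of_int j" by (auto elim: Ints_cases)
  have cj: "c = of_int j / of_nat p" using j p by (simp add: field_simps)
  have "(1 / of_nat (p ^ N) :: rat) [^]\<^bsub>quasicyclic_group p\<^esub> (int p ^ (N - 1) * j)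
      = frac (of_int (int p ^ (N - 1) * j) * (1 / of_nat (p ^ N)))"
    using qc_int_pow[OF _ qc_e_carrier[OF p N]] p by simp
  also have "of_int (int p ^ (N - 1) * j) * (1 / of_nat (p ^ N)) = (of_int j / of_nat p :: rat)"
  proof -
    have "(of_nat (p ^ N) :: rat) = of_nat p ^ (N - 1) * of_nat p" using N
      by (metis Suc_diff_1 of_nat_power power_Suc2)
    then show ?thesis using p by (simp add: field_simps)
  qed
  also have "frac (of_int j / of_nat p :: rat) = c" using cj c01 by (simp add: frac_eq)
  finally show "\<exists>j::int. c = (1 / of_nat (p ^ N) :: rat) [^]\<^bsub>quasicyclic_group p\<^esub> (int p ^ (N - 1) * j)" by metis
qed




context group begin

lemma zpart:
  assumes K: "group K" and I: "infinite I" and a: "a \<in> carrier K"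
    and ao: "\<forall>b::int. a [^]\<^bsub>K\<^esub> b = \<one>\<^bsub>K\<^esub> \<longleftrightarrow> R dvd b"
    and sZ: "subgroup Zs G" and iso: "G\<lparr>carrier := Zs\<rparr> \<cong> sum_group I (\<lambda>_. K)"
  shows "\<exists>z0 \<xi>. z0 \<in> Zs \<and> (\<forall>b::int. z0 [^] b = \<one> \<longleftrightarrow> R dvd b) \<and> (\<forall>z\<in>Zs. \<xi> z \<in> Zs)
    \<and> (\<forall>x\<in>Zs. \<forall>y\<in>Zs. \<xi> (x \<otimes> y) = \<xi> x \<otimes> \<xi> y) \<and> inj_on \<xi> Zs
    \<and> (\<forall>k::int. z0 [^] k \<in> \<xi> ` Zs \<longrightarrow> z0 [^] k = \<one>)"
proof -
  obtain i0 \<zeta> where z: "i0 \<in> I" "\<zeta> \<in> hom (sum_group I (\<lambda>_. K)) (sum_group I (\<lambda>_. K))"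
     "inj_on \<zeta> (carrier (sum_group I (\<lambda>_. K)))"
     "\<forall>a\<in>carrier K. \<forall>k::int. unitv I K i0 a [^]\<^bsub>sum_group I (\<lambda>_. K)\<^esub> k \<in> \<zeta> ` carrier (sum_group I (\<lambda>_. K))
          \<longrightarrow> unitv I K i0 a [^]\<^bsub>sum_group I (\<lambda>_. K)\<^esub> k = \<one>\<^bsub>sum_group I (\<lambda>_. K)\<^esub>"
    using shift_unitv[OF K I] by blast
  obtain \<psi> where psi: "\<psi> \<in> iso (sum_group I (\<lambda>_. K)) (G\<lparr>carrier := Zs\<rparr>)" using get_inv_iso[OF sZ iso] by blast
  note gM = sg_group[OF K, of I]
  note ec = unitv_carrier[OF K a, of I i0]
  obtain \<xi> where xi: "(\<forall>y\<in>Zs. \<xi> y \<in> Zs)" "(\<forall>a\<in>Zs. \<forall>b\<in>Zs. \<xi> (a \<otimes> b) = \<xi> a \<otimes> \<xi> b)" "inj_on \<xi> Zs"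
     "(\<forall>k::int. \<psi> (unitv I K i0 a) [^] k \<in> \<xi> ` Zs \<longrightarrow> \<psi> (unitv I K i0 a) [^] k = \<one>)"
    using tr_shift[OF sZ gM psi z(2) z(3) ec] z(4) a by blast
  have "\<psi> (unitv I K i0 a) \<in> Zs" using tr_basic(1)[OF sZ gM psi ec] .
  moreover have "\<forall>b::int. \<psi> (unitv I K i0 a) [^] b = \<one> \<longleftrightarrow> R dvd b"
    using tr_ord[OF sZ gM psi ec] unitv_pow_one[OF K a z(1)] ao by simp
  ultimately show ?thesis using xi by blast
qed

lemma ycyc:
  assumes p: "p > 1" and n: "n > 0" and sY: "subgroup Ys G"
    and iso: "G\<lparr>carrier := Ys\<rparr> \<cong> integer_mod_group (p ^ n)"
  shows "\<exists>y0\<in>Ys. (\<forall>k::int. y0 [^] k = \<one> \<longleftrightarrow> int p ^ n dvd k) \<and> (\<forall>y\<in>Ys. y [^] (int p ^ n) = \<one>)"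
proof -
  obtain \<psi> where psi: "\<psi> \<in> iso (integer_mod_group (p ^ n)) (G\<lparr>carrier := Ys\<rparr>)" using get_inv_iso[OF sY iso] by blast
  note gM = group_integer_mod_group[of "p ^ n"]
  note ec = im_one_carrier[OF p n]
  have "\<psi> 1 \<in> Ys" using tr_basic(1)[OF sY gM psi ec] .
  moreover have "\<forall>k::int. \<psi> 1 [^] k = \<one> \<longleftrightarrow> int p ^ n dvd k"
    using tr_ord[OF sY gM psi ec] im_one_pow by simp
  moreover have "\<forall>y\<in>Ys. y [^] (int p ^ n) = \<one>" using tr_exp[OF sY gM psi im_exp] .
  ultimately show ?thesis by blast
qed

lemma yexp_sum:
  assumes sY: "subgroup Ys G"
    and iso: "G\<lparr>carrier := Ys\<rparr> \<cong> sum_group I (\<lambda>_. integer_mod_group (p ^ n))"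
  shows "\<forall>y\<in>Ys. y [^] (int p ^ n) = \<one>"
proof -
  obtain \<psi> where psi: "\<psi> \<in> iso (sum_group I (\<lambda>_. integer_mod_group (p ^ n))) (G\<lparr>carrier := Ys\<rparr>)"
    using get_inv_iso[OF sY iso] by blast
  note gM = sg_group[OF group_integer_mod_group[of "p ^ n"], of I]
  show ?thesis using tr_exp[OF sY gM psi sg_exp[OF group_integer_mod_group im_exp]] .
qed

lemma zq:
  assumes p: "p > 1" and sZ: "subgroup Zs G"
    and iso: "G\<lparr>carrier := Zs\<rparr> \<cong> quasicyclic_group p"
  shows "\<exists>z0\<in>Zs. (\<forall>k::int. z0 [^] k = \<one> \<longleftrightarrow> int p ^ (n+2) dvd k) \<and> (\<forall>z\<in>Zs. \<exists>w\<in>Zs. w [^] (int p) = z)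
     \<and> (\<forall>c\<in>Zs. c [^] (int p) = \<one> \<longrightarrow> (\<exists>j::int. c = z0 [^] (int p ^ (n+1) * j)))"
proof -
  obtain \<psi> where psi: "\<psi> \<in> iso (quasicyclic_group p) (G\<lparr>carrier := Zs\<rparr>)" using get_inv_iso[OF sZ iso] by blast
  have gM: "group (quasicyclic_group p)" using group_qc p by simp
  have N: "n + 2 > 0" by simp
  note ec = qc_e_carrier[OF p N]
  have "\<psi> (1 / of_nat (p ^ (n+2))) \<in> Zs" using tr_basic(1)[OF sZ gM psi ec] .
  moreover have "\<forall>k::int. \<psi> (1 / of_nat (p ^ (n+2))) [^] k = \<one> \<longleftrightarrow> int p ^ (n+2) dvd k"
    using tr_ord[OF sZ gM psi ec] qc_e_pow[OF p N] by simp
  moreover have "\<forall>z\<in>Zs. \<exists>w\<in>Zs. w [^] (int p) = z" using tr_div[OF sZ gM psi qc_div[OF p]] .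
  moreover have "\<forall>c\<in>Zs. c [^] (int p) = \<one> \<longrightarrow> (\<exists>j::int. c = \<psi> (1 / of_nat (p ^ (n+2))) [^] (int p ^ (n+1) * j))"
    using tr_soc[OF sZ gM psi ec qc_soc[OF p N]] by simp
  ultimately show ?thesis by blast
qed

end



lemma pow_dvd_cancel: fixes P :: int assumes "P \<noteq> 0" "n + 2 \<le> m" "P ^ m dvd P ^ 2 * a" shows "P ^ n dvd a"
proof -
  have "P ^ 2 * P ^ n dvd P ^ m" using assms(2)
    by (metis add.commute le_imp_power_dvd power_add)
  then have "P ^ 2 * P ^ n dvd P ^ 2 * a" using assms(3) dvd_trans by blast
  then show ?thesis using assms(1) by simp
qed

theorem lemma2p10:
  fixes G :: "('a, 'b) monoid_scheme" (structure) and p n :: nat and Xs Ys Zs :: "'a set" and I :: "'i set"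
  assumes "comm_group G"
    and "Factorial_Ring.prime p"
    and "p_group p G"
    and "n > 0"
    and "direct_summand G Xs"
    and "internal_direct_sum G Ys Zs Xs"
    and "infinite I"
    and "(G\<lparr>carrier := Ys\<rparr> \<cong> integer_mod_group (p ^ n) \<and>
           ((\<exists>m::nat. n + 2 \<le> m \<and>
               G\<lparr>carrier := Zs\<rparr> \<cong> sum_group I (\<lambda>_. integer_mod_group (p ^ m)))
            \<or> G\<lparr>carrier := Zs\<rparr> \<cong> sum_group I (\<lambda>_. quasicyclic_group p)))
       \<or> (G\<lparr>carrier := Ys\<rparr> \<cong> sum_group I (\<lambda>_. integer_mod_group (p ^ n)) \<and>
           G\<lparr>carrier := Zs\<rparr> \<cong> quasicyclic_group p)"
  shows "\<not> semi_generalized_bassian G"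
proof -
  interpret comm_group G by fact
  define P where "P = int p"
  have p1: "p > 1" using assms(2) prime_gt_1_nat by blast
  have P1: "P > 1" using p1 P_def by simp
  have prP: "Factorial_Ring.prime P" using assms(2) P_def by simp
  have n: "n > 0" by fact
  obtain W where XW: "internal_direct_sum G Xs W (carrier G)" using assms(5) unfolding direct_summand_def by blast
  note YZ = assms(6)
  have sY: "subgroup Ys G" and sZ: "subgroup Zs G" using ids_basic[OF YZ] by auto
  have nd: "\<not> P ^ n dvd P ^ (n - 1)"
  proof
    assume "P ^ n dvd P ^ (n - 1)"
    then have "P ^ n \<le> P ^ (n - 1)" using P1 by (simp add: zdvd_imp_le)
    moreover have "P ^ (n - 1) < P ^ n" using P1 n by (simp add: power_strict_increasing)
    ultimately show False by simp
  qed
  have Pne: "P \<noteq> 0" using P1 by simp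
  have h1: "\<one> \<in> {h [^] (k::int) |k. True}" for h
    by (rule CollectI, rule exI[of _ "0::int"]) simp
  from assms(8) show ?thesis
  proof (elim disjE)
    assume AA: "G\<lparr>carrier := Ys\<rparr> \<cong> integer_mod_group (p ^ n) \<and>
           ((\<exists>m::nat. n + 2 \<le> m \<and>
               G\<lparr>carrier := Zs\<rparr> \<cong> sum_group I (\<lambda>_. integer_mod_group (p ^ m)))
            \<or> G\<lparr>carrier := Zs\<rparr> \<cong> sum_group I (\<lambda>_. quasicyclic_group p))"
    then have isoY: "G\<lparr>carrier := Ys\<rparr> \<cong> integer_mod_group (p ^ n)" by blast
    have zcase: "(\<exists>m::nat. n + 2 \<le> m \<and> G\<lparr>carrier := Zs\<rparr> \<cong> sum_group I (\<lambda>_. integer_mod_group (p ^ m)))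
            \<or> G\<lparr>carrier := Zs\<rparr> \<cong> sum_group I (\<lambda>_. quasicyclic_group p)" using AA by blast
    obtain y0 where y0: "y0 \<in> Ys" "\<forall>k::int. y0 [^] k = \<one> \<longleftrightarrow> P ^ n dvd k" "\<forall>y\<in>Ys. y [^] (P ^ n) = \<one>"
      unfolding P_def using ycyc[OF p1 n sY isoY] by blast
    have "\<exists>z0 \<xi>. z0 \<in> Zs \<and> (\<forall>a::int. z0 [^] (P^2*a) = \<one> \<longrightarrow> P^n dvd a) \<and> (\<forall>z\<in>Zs. \<xi> z \<in> Zs)
        \<and> (\<forall>x\<in>Zs. \<forall>y\<in>Zs. \<xi> (x \<otimes> y) = \<xi> x \<otimes> \<xi> y) \<and> inj_on \<xi> Zs
        \<and> (\<forall>k::int. z0 [^] k \<in> \<xi> ` Zs \<longrightarrow> z0 [^] k = \<one>)"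
      using zcase
    proof (elim disjE exE conjE)
      fix m assume m: "n + 2 \<le> m" and isoZ: "G\<lparr>carrier := Zs\<rparr> \<cong> sum_group I (\<lambda>_. integer_mod_group (p ^ m))"
      have m0: "m > 0" using m by simp
      obtain z0 \<xi> where z: "z0 \<in> Zs" "\<forall>b::int. z0 [^] b = \<one> \<longleftrightarrow> P^m dvd b" "(\<forall>z\<in>Zs. \<xi> z \<in> Zs)"
        "(\<forall>x\<in>Zs. \<forall>y\<in>Zs. \<xi> (x \<otimes> y) = \<xi> x \<otimes> \<xi> y)" "inj_on \<xi> Zs" "(\<forall>k::int. z0 [^] k \<in> \<xi> ` Zs \<longrightarrow> z0 [^] k = \<one>)"
      proof -
        have ao: "\<forall>b::int. (1::int) [^]\<^bsub>integer_mod_group (p ^ m)\<^esub> b = \<one>\<^bsub>integer_mod_group (p ^ m)\<^esub> \<longleftrightarrow> int p ^ m dvd b"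
          using im_one_pow by blast
        show ?thesis
          using zpart[OF group_integer_mod_group assms(7) im_one_carrier[OF p1 m0] ao sZ isoZ] that unfolding P_def by blast
      qed
      have "\<forall>a::int. z0 [^] (P^2*a) = \<one> \<longrightarrow> P^n dvd a"
      proof (intro allI impI)
        fix a :: int assume "z0 [^] (P^2*a) = \<one>"
        then have "P^m dvd P^2*a" using z(2) by blast
        then show "P^n dvd a" using pow_dvd_cancel[OF Pne m] by blast
      qed
      then show ?thesis using z by blast
    next
      assume isoZ: "G\<lparr>carrier := Zs\<rparr> \<cong> sum_group I (\<lambda>_. quasicyclic_group p)"
      have N: "n + 2 > 0" by simp
      obtain z0 \<xi> where z: "z0 \<in> Zs" "\<forall>b::int. z0 [^] b = \<one> \<longleftrightarrow> P^(n+2) dvd b" "(\<forall>z\<in>Zs. \<xi> z \<in> Zs)"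
        "(\<forall>x\<in>Zs. \<forall>y\<in>Zs. \<xi> (x \<otimes> y) = \<xi> x \<otimes> \<xi> y)" "inj_on \<xi> Zs" "(\<forall>k::int. z0 [^] k \<in> \<xi> ` Zs \<longrightarrow> z0 [^] k = \<one>)"
      proof -
        have ao: "\<forall>b::int. (1 / of_nat (p ^ (n+2)) :: rat) [^]\<^bsub>quasicyclic_group p\<^esub> b = \<one>\<^bsub>quasicyclic_group p\<^esub> \<longleftrightarrow> int p ^ (n+2) dvd b"
          using qc_e_pow[OF p1 N] by blast
        have gq: "group (quasicyclic_group p)" using group_qc p1 by simp
        show ?thesis
          using zpart[OF gq assms(7) qc_e_carrier[OF p1 N] ao sZ isoZ] that unfolding P_def by blast
      qed
      have "\<forall>a::int. z0 [^] (P^2*a) = \<one> \<longrightarrow> P^n dvd a"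
      proof (intro allI impI)
        fix a :: int assume "z0 [^] (P^2*a) = \<one>"
        then have "P^(n+2) dvd P^2*a" using z(2) by blast
        then show "P^n dvd a" using pow_dvd_cancel[OF Pne, of n "n+2"] by blast
      qed
      then show ?thesis using z by blast
    qed
    then obtain z0 \<xi> where z: "z0 \<in> Zs" "\<forall>a::int. z0 [^] (P^2*a) = \<one> \<longrightarrow> P^n dvd a" "(\<forall>z\<in>Zs. \<xi> z \<in> Zs)"
        "(\<forall>x\<in>Zs. \<forall>y\<in>Zs. \<xi> (x \<otimes> y) = \<xi> x \<otimes> \<xi> y)" "inj_on \<xi> Zs" "(\<forall>k::int. z0 [^] k \<in> \<xi> ` Zs \<longrightarrow> z0 [^] k = \<one>)"
      by blast
    have cY: "y \<in> carrier G" if "y \<in> Ys" for y using sY that subgroup.mem_carrier by metis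
    have cZ: "y \<in> carrier G" if "y \<in> Zs" for y using sZ that subgroup.mem_carrier by metis
    have xi1: "\<xi> \<one> = \<one>"
    proof -
      have o: "\<one> \<in> Zs" using sZ by (rule subgroup.one_closed)
      have c1: "\<xi> \<one> \<in> carrier G" using z(3) o cZ by blast
      have "\<xi> \<one> \<otimes> \<xi> \<one> = \<xi> \<one> \<otimes> \<one>" using z(4)[rule_format, OF o o] c1 by simp
      then show ?thesis by (rule l_cancel[OF _ c1 one_closed c1])
    qed
    show ?thesis
    proof (rule build[OF XW YZ prP n y0(1) _ y0(3) z(1) z(2) refl, where \<alpha> = "\<lambda>y. y" and \<beta> = \<xi>])
      show "y0 [^] (P ^ (n - 1)) \<noteq> \<one>" using y0(2) nd by blast
      show "\<forall>y\<in>Ys. y \<in> Ys" by blast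
      show "\<forall>z\<in>Zs. \<xi> z \<in> Zs" using z(3) .
      show "\<forall>y1\<in>Ys. \<forall>y2\<in>Ys. \<exists>c\<in>{(y0 \<otimes> z0 [^] P) [^] (k::int) |k. True}. y1 \<otimes> y2 = y1 \<otimes> y2 \<otimes> c"
        using h1 cY by (intro ballI bexI[OF _ h1]) simp
      show "\<forall>z1\<in>Zs. \<forall>z2\<in>Zs. \<exists>c\<in>{(y0 \<otimes> z0 [^] P) [^] (k::int) |k. True}. \<xi> (z1 \<otimes> z2) = \<xi> z1 \<otimes> \<xi> z2 \<otimes> c"
        using z(3,4) cZ by (intro ballI bexI[OF _ h1]) simp
      show "\<forall>y\<in>Ys. \<forall>z\<in>Zs. \<forall>k::int. y = y0 [^] k \<longrightarrow> \<xi> z = z0 [^] (P * k) \<longrightarrow> y = \<one> \<and> z = \<one>"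
      proof (intro ballI allI impI)
        fix y z and k :: int assume yz: "y \<in> Ys" "z \<in> Zs" "y = y0 [^] k" "\<xi> z = z0 [^] (P * k)"
        have "z0 [^] (P * k) \<in> \<xi> ` Zs" using yz(2,4) by (metis image_eqI)
        then have "z0 [^] (P * k) = \<one>" using z(6) by blast
        moreover have "z0 [^] (P^2 * k) = (z0 [^] (P * k)) [^] P" using cZ[OF z(1)]
          by (simp add: int_pow_pow power2_eq_square mult_ac)
        ultimately have "z0 [^] (P^2 * k) = \<one>" by simp
        then have "P ^ n dvd k" using z(2) by blast
        then have "y = \<one>" using yz y0(2) by simp
        moreover have "z = \<one>" using inj_onD[OF z(5) _ yz(2) subgroup.one_closed[OF sZ]] yz \<open>z0 [^] (P * k) = \<one>\<close> xi1
          by simp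
        ultimately show "y = \<one> \<and> z = \<one>" by simp
      qed
    qed
  next
    assume BB: "G\<lparr>carrier := Ys\<rparr> \<cong> sum_group I (\<lambda>_. integer_mod_group (p ^ n)) \<and>
           G\<lparr>carrier := Zs\<rparr> \<cong> quasicyclic_group p"
    then have isoY: "G\<lparr>carrier := Ys\<rparr> \<cong> sum_group I (\<lambda>_. integer_mod_group (p ^ n))"
      and isoZ: "G\<lparr>carrier := Zs\<rparr> \<cong> quasicyclic_group p" by blast+
    obtain y0 \<xi> where y: "y0 \<in> Ys" "\<forall>b::int. y0 [^] b = \<one> \<longleftrightarrow> P^n dvd b" "(\<forall>z\<in>Ys. \<xi> z \<in> Ys)"
        "(\<forall>x\<in>Ys. \<forall>y\<in>Ys. \<xi> (x \<otimes> y) = \<xi> x \<otimes> \<xi> y)" "inj_on \<xi> Ys" "(\<forall>k::int. y0 [^] k \<in> \<xi> ` Ys \<longrightarrow> y0 [^] k = \<one>)"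
    proof -
      have ao: "\<forall>b::int. (1::int) [^]\<^bsub>integer_mod_group (p ^ n)\<^esub> b = \<one>\<^bsub>integer_mod_group (p ^ n)\<^esub> \<longleftrightarrow> int p ^ n dvd b"
        using im_one_pow by blast
      show ?thesis
        using zpart[OF group_integer_mod_group assms(7) im_one_carrier[OF p1 n] ao sY isoY] that unfolding P_def by blast
    qed
    have yexp: "\<forall>y\<in>Ys. y [^] (P ^ n) = \<one>" unfolding P_def using yexp_sum[OF sY isoY] .
    obtain z0 where z: "z0 \<in> Zs" "\<forall>k::int. z0 [^] k = \<one> \<longleftrightarrow> P ^ (n+2) dvd k" "\<forall>z\<in>Zs. \<exists>w\<in>Zs. w [^] P = z"
      "\<forall>c\<in>Zs. c [^] P = \<one> \<longrightarrow> (\<exists>j::int. c = z0 [^] (P ^ (n+1) * j))"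
      unfolding P_def using zq[OF p1 sZ isoZ, of n] by blast
    have cY: "y \<in> carrier G" if "y \<in> Ys" for y using sY that subgroup.mem_carrier by metis
    have cZ: "y \<in> carrier G" if "y \<in> Zs" for y using sZ that subgroup.mem_carrier by metis
    have zord: "\<forall>a::int. z0 [^] (P^2*a) = \<one> \<longrightarrow> P^n dvd a"
    proof (intro allI impI)
      fix a :: int assume "z0 [^] (P^2*a) = \<one>"
      then have "P^(n+2) dvd P^2*a" using z(2) by blast
      then show "P^n dvd a" using pow_dvd_cancel[OF Pne, of n "n+2"] by blast
    qed
    define d where "d z = (SOME w. w \<in> Zs \<and> w [^] P = z)" for z
    have d: "d z \<in> Zs" "d z [^] P = z" if "z \<in> Zs" for z
      using someI_ex[of "\<lambda>w. w \<in> Zs \<and> w [^] P = z"] z(3) that unfolding d_def by blast+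
    have xi1: "\<xi> \<one> = \<one>"
    proof -
      have o: "\<one> \<in> Ys" using sY by (rule subgroup.one_closed)
      have c1: "\<xi> \<one> \<in> carrier G" using y(3) o cY by blast
      have "\<xi> \<one> \<otimes> \<xi> \<one> = \<xi> \<one> \<otimes> \<one>" using y(4)[rule_format, OF o o] c1 by simp
      then show ?thesis by (rule l_cancel[OF _ c1 one_closed c1])
    qed
    have cy0: "y0 \<in> carrier G" using cY y(1) .
    have cz0: "z0 \<in> carrier G" using cZ z(1) .
    show ?thesis
    proof (rule build[OF XW YZ prP n y(1) _ yexp z(1) zord refl, where \<alpha> = \<xi> and \<beta> = d])
      show "y0 [^] (P ^ (n - 1)) \<noteq> \<one>" using y(2) nd by blast
      show "\<forall>y\<in>Ys. \<xi> y \<in> Ys" using y(3) .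
      show "\<forall>z\<in>Zs. d z \<in> Zs" using d by blast
      show "\<forall>y1\<in>Ys. \<forall>y2\<in>Ys. \<exists>c\<in>{(y0 \<otimes> z0 [^] P) [^] (k::int) |k. True}. \<xi> (y1 \<otimes> y2) = \<xi> y1 \<otimes> \<xi> y2 \<otimes> c"
        using y(3,4) cY by (intro ballI bexI[OF _ h1]) simp
      show "\<forall>z1\<in>Zs. \<forall>z2\<in>Zs. \<exists>c\<in>{(y0 \<otimes> z0 [^] P) [^] (k::int) |k. True}. d (z1 \<otimes> z2) = d z1 \<otimes> d z2 \<otimes> c"
      proof (intro ballI)
        fix z1 z2 assume z12: "z1 \<in> Zs" "z2 \<in> Zs"
        have zz: "z1 \<otimes> z2 \<in> Zs" using sZ z12 subgroup.m_closed by metis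
        define c where "c = d (z1 \<otimes> z2) \<otimes> inv (d z1 \<otimes> d z2)"
        have cc: "c \<in> Zs" unfolding c_def using sZ d z12 zz
          by (meson subgroup.m_closed subgroup.m_inv_closed)
        have dc: "d z1 \<in> carrier G" "d z2 \<in> carrier G" "d (z1 \<otimes> z2) \<in> carrier G" using d z12 zz cZ by auto
        have "c [^] P = d (z1 \<otimes> z2) [^] P \<otimes> inv ((d z1 \<otimes> d z2) [^] P)"
          unfolding c_def using dc by (simp add: int_pow_distrib int_pow_inv)
        also have "\<dots> = \<one>" using d z12 zz dc cZ by (simp add: int_pow_distrib)
        finally obtain j where j: "c = z0 [^] (P ^ (n+1) * j)" using z(4) cc by blast
        have "(y0 \<otimes> z0 [^] P) [^] (P ^ n * j) = y0 [^] (P ^ n * j) \<otimes> z0 [^] (P * (P ^ n * j))"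
          using cy0 cz0 by (simp add: int_pow_distrib int_pow_pow)
        also have "y0 [^] (P ^ n * j) = \<one>" using y(2) by simp
        also have "z0 [^] (P * (P ^ n * j)) = c" using j by (simp add: mult_ac)
        finally have cH: "c \<in> {(y0 \<otimes> z0 [^] P) [^] (k::int) |k. True}" using cZ[OF cc] by auto
        have "d (z1 \<otimes> z2) = d z1 \<otimes> d z2 \<otimes> c" unfolding c_def using dc
          by (simp add: m_ac)
        then show "\<exists>c\<in>{(y0 \<otimes> z0 [^] P) [^] (k::int) |k. True}. d (z1 \<otimes> z2) = d z1 \<otimes> d z2 \<otimes> c"
          using cH by blast
      qed
      show "\<forall>y\<in>Ys. \<forall>z\<in>Zs. \<forall>k::int. \<xi> y = y0 [^] k \<longrightarrow> d z = z0 [^] (P * k) \<longrightarrow> y = \<one> \<and> z = \<one>"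
      proof (intro ballI allI impI)
        fix y z and k :: int assume yz: "y \<in> Ys" "z \<in> Zs" "\<xi> y = y0 [^] k" "d z = z0 [^] (P * k)"
        have "y0 [^] k \<in> \<xi> ` Ys" using yz(1,3) by (metis image_eqI)
        then have "y0 [^] k = \<one>" using y(6) by blast
        then have "P ^ n dvd k" using y(2) by blast
        have "y = \<one>" using inj_onD[OF y(5) _ yz(1) subgroup.one_closed[OF sY]] yz \<open>y0 [^] k = \<one>\<close> xi1 by simp
        moreover have "z = \<one>"
        proof -
          have "z = (z0 [^] (P * k)) [^] P" using d(2)[OF yz(2)] yz(4) by simp
          also have "\<dots> = z0 [^] (P ^ (n+2) * (k div P ^ n))"
            using cz0 \<open>P ^ n dvd k\<close> by (simp add: int_pow_pow power2_eq_square mult_ac)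
          also have "\<dots> = \<one>" using z(2) by simp
          finally show ?thesis .
        qed
        ultimately show "y = \<one> \<and> z = \<one>" by simp
      qed
    qed
  qed
qed


end
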